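(* Let $p,q,p',q'\in(0,1/2)$ and suppose $K_{pq}$ and $K_{p'q'}$ are twofold Cantor sets, with generating systems $\{S_1,S_2,S_3,S_4\}$ and $\{S_1',S_2',S_3',S_4'\}$ respectively. Then: (i) there is a homeomorphism $f:K_{pq}\to K_{p'q'}$ realising an isomorphism of the self-similar structures, i.e. $f(S_i(x))=S_i'(f(x))$ for all $x\in K_{pq}$ and all $i\in\{1,2,3,4\}$; (ii) if $(p,q)\neq(p',q')$, then such a homeomorphism $f$ cannot be extended to a homeomorphism of $[0,1]$ onto itself.
   Context: For $p,q\in(0,1/2)$ let $S_1(x)=px$, $S_2(x)=qx$, $S_3(x)=px+1-p$, $S_4(x)=qx+1-q$, let $K_{pq}$ be the attractor of $\{S_1,S_2,S_3,S_4\}$ (the unique nonempty compact $K\subset\mathbb R$ with $K=\bigcup_{i=1}^4S_i(K)$), and let $A=S_3(K_{pq})\cup S_4(K_{pq})$. $K_{pq}$ is called a twofold Cantor set if $S_1^m(A)\cap S_2^n(A)=\varnothing$ for all $m,n\in\mathbb N$. The maps $S_i'$ are defined in the same way with $p',q'$ in place of $p,q$. *)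

theory Defs
  imports "HOL-Analysis.Analysis"
begin

definition Smap :: "real \<Rightarrow> real \<Rightarrow> nat \<Rightarrow> real \<Rightarrow> real" where
  "Smap p q i x =
     (if i = 1 then p * x
      else if i = 2 then q * x
      else if i = 3 then p * x + 1 - p
      else q * x + 1 - q)"

definition Kpq :: "real \<Rightarrow> real \<Rightarrow> real set" where
  "Kpq p q = (THE K. K \<noteq> {} \<and> compact K \<and> K = (\<Union>i\<in>{1..4}. Smap p q i ` K))"

definition Apq :: "real \<Rightarrow> real \<Rightarrow> real set" where
  "Apq p q = Smap p q 3 ` Kpq p q \<union> Smap p q 4 ` Kpq p q"

definition twofold :: "real \<Rightarrow> real \<Rightarrow> bool" where
  "twofold p q \<longleftrightarrow>
     (\<forall>m n. m \<ge> 1 \<longrightarrow> n \<ge> 1 \<longrightarrow>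
        ((Smap p q 1) ^^ m) ` Apq p q \<inter> ((Smap p q 2) ^^ n) ` Apq p q = {})"

end

theory Submission
  imports Defs
begin


lemma attr_sub:
  fixes T :: "nat \<Rightarrow> 'a::heine_borel \<Rightarrow> 'a"
  assumes c: "0 \<le> c" "c < 1" and lip: "\<And>i x y. i \<in> I \<Longrightarrow> dist (T i x) (T i y) \<le> c * dist x y"
  and K1: "compact K1" "K1 = (\<Union>i\<in>I. T i ` K1)"
  and K2: "compact K2" "K2 \<noteq> {}" "K2 = (\<Union>i\<in>I. T i ` K2)"
  shows "K1 \<subseteq> K2"
proof
  fix x assume x: "x \<in> K1"
  obtain y0 where y0: "y0 \<in> K2" using K2 by auto
  obtain z e where ze: "\<forall>y\<in>K1. dist z y \<le> e" using compact_imp_bounded[OF K1(1)] unfolding bounded_def by auto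
  define B where "B = e + dist z y0"
  have step: "infdist (T i u) K2 \<le> c * infdist u K2" if "i \<in> I" for i u
  proof -
    obtain v where v: "v \<in> K2" "infdist u K2 = dist u v"
      using infdist_attains_inf[OF compact_imp_closed[OF K2(1)] K2(2)] by metis
    have "T i v \<in> K2" using v K2(3) that by blast
    then have "infdist (T i u) K2 \<le> dist (T i u) (T i v)" by (rule infdist_le)
    also have "\<dots> \<le> c * dist u v" using lip that by auto
    finally show ?thesis using v by simp
  qed
  have main: "\<forall>x\<in>K1. infdist x K2 \<le> c ^ n * B" for n
  proof (induction n)
    case 0
    show ?case
    proof
      fix x assume "x \<in> K1"
      have "infdist x K2 \<le> dist x y0" using y0 by (rule infdist_le)
      also have "\<dots> \<le> dist z x + dist z y0" by (metis dist_commute dist_triangle)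
      also have "\<dots> \<le> B" using ze \<open>x \<in> K1\<close> B_def by auto
      finally show "infdist x K2 \<le> c ^ 0 * B" by simp
    qed
  next
    case (Suc n)
    show ?case
    proof
      fix x assume "x \<in> K1"
      then obtain i u where iu: "i \<in> I" "u \<in> K1" "x = T i u" using K1(2) by blast
      have "infdist x K2 \<le> c * infdist u K2" using step iu by auto
      also have "\<dots> \<le> c * (c ^ n * B)" using Suc iu c by (intro mult_left_mono) auto
      finally show "infdist x K2 \<le> c ^ Suc n * B" by simp
    qed
  qed
  have "infdist x K2 = 0"
  proof (rule ccontr)
    assume "infdist x K2 \<noteq> 0"
    then have pos: "infdist x K2 > 0" using infdist_nonneg[of x K2] by linarith
    have "B \<ge> 0" using main[of 0] x pos by auto
    show False
    proof (cases "B = 0")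
      case True then show ?thesis using main[of 0] x pos by auto
    next
      case False
      then have "B > 0" using \<open>B \<ge> 0\<close> by auto
      obtain n where "c ^ n < infdist x K2 / B" using real_arch_pow_inv[of "infdist x K2 / B" c] pos \<open>B>0\<close> c by auto
      then have "c ^ n * B < infdist x K2" using \<open>B>0\<close> by (simp add: field_simps)
      then show False using main[of n] x by auto
    qed
  qed
  then show "x \<in> K2" using in_closure_iff_infdist_zero[OF K2(2)] compact_imp_closed[OF K2(1)] closure_closed by metis
qed

lemma attr_unique:
  fixes T :: "nat \<Rightarrow> 'a::heine_borel \<Rightarrow> 'a"
  assumes c: "0 \<le> c" "c < 1" and lip: "\<And>i x y. i \<in> I \<Longrightarrow> dist (T i x) (T i y) \<le> c * dist x y"
  and K1: "compact K1" "K1 \<noteq> {}" "K1 = (\<Union>i\<in>I. T i ` K1)"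
  and K2: "compact K2" "K2 \<noteq> {}" "K2 = (\<Union>i\<in>I. T i ` K2)"
  shows "K1 = K2"
  using attr_sub[OF c lip K1(1) K1(3) K2] attr_sub[OF c lip K2(1) K2(3) K1] by blast

inductive_set ifs_pts :: "(nat \<Rightarrow> 'a \<Rightarrow> 'a) \<Rightarrow> nat set \<Rightarrow> 'a \<Rightarrow> 'a set" for T I x0 where
  base: "x0 \<in> ifs_pts T I x0"
| step: "i \<in> I \<Longrightarrow> x \<in> ifs_pts T I x0 \<Longrightarrow> T i x \<in> ifs_pts T I x0"

lemma attr_exists:
  fixes T :: "nat \<Rightarrow> 'a::heine_borel \<Rightarrow> 'a"
  assumes I: "finite I" "ia \<in> I" and fix0: "T ia x0 = x0"
  and C: "compact C" "x0 \<in> C" "\<And>i. i \<in> I \<Longrightarrow> T i ` C \<subseteq> C"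
  and cont: "\<And>i. i \<in> I \<Longrightarrow> continuous_on C (T i)"
  shows "\<exists>K. compact K \<and> K \<noteq> {} \<and> K = (\<Union>i\<in>I. T i ` K) \<and> x0 \<in> K \<and> K \<subseteq> C"
proof -
  let ?P = "ifs_pts T I x0"
  have PC: "?P \<subseteq> C"
  proof
    fix x assume "x \<in> ?P" then show "x \<in> C" by induction (use C in auto)
  qed
  have Peq: "?P = (\<Union>i\<in>I. T i ` ?P)"
  proof
    show "?P \<subseteq> (\<Union>i\<in>I. T i ` ?P)"
    proof
      fix x assume "x \<in> ?P"
      then show "x \<in> (\<Union>i\<in>I. T i ` ?P)"
      proof cases
        case base then show ?thesis using I fix0 ifs_pts.base[of x0 T I] by (metis UN_iff imageI)
      next
        case (step i y) then show ?thesis by blast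
      qed
    qed
  qed (auto intro: ifs_pts.step)
  define K where "K = closure ?P"
  have KC: "K \<subseteq> C" unfolding K_def using PC C compact_imp_closed closure_minimal by blast
  have cK: "compact K"
    using bounded_subset[OF compact_imp_bounded[OF C(1)] KC] closed_closure[of ?P]
    unfolding K_def compact_eq_bounded_closed by auto
  have contK: "continuous_on K (T i)" if "i \<in> I" for i using cont[OF that] KC continuous_on_subset by blast
  have sub1: "T i ` K \<subseteq> K" if "i \<in> I" for i
  proof -
    have "T i ` ?P \<subseteq> closure ?P" using Peq that closure_subset by blast
    then show ?thesis unfolding K_def
      by (intro image_closure_subset) (use contK[OF that] K_def in auto)
  qed
  have sub2: "K \<subseteq> (\<Union>i\<in>I. T i ` K)"
  proof -
    have cl: "closed (\<Union>i\<in>I. T i ` K)"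
      using I(1) by (intro closed_UN) (auto intro!: compact_imp_closed compact_continuous_image contK cK)
    have "(\<Union>i\<in>I. T i ` ?P) \<subseteq> (\<Union>i\<in>I. T i ` K)"
      using closure_subset K_def by (intro UN_mono image_mono) auto
    then have "?P \<subseteq> (\<Union>i\<in>I. T i ` K)" using equalityD1[OF Peq] by (rule order_trans[rotated])
    from closure_minimal[OF this cl] show ?thesis unfolding K_def .
  qed
  have KK: "K = (\<Union>i\<in>I. T i ` K)" by (rule equalityI[OF sub2 UN_least[OF sub1]])
  have x0K: "x0 \<in> K" unfolding K_def using ifs_pts.base[of x0 T I] closure_subset by blast
  then have ne: "K \<noteq> {}" by blast
  show ?thesis by (rule exI[of _ K], intro conjI, fact cK, fact ne, fact KK, fact x0K, fact KC)
qed


definition good :: "real \<Rightarrow> real \<Rightarrow> bool" where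
  "good p q \<longleftrightarrow> 0 < p \<and> p < 1/2 \<and> 0 < q \<and> q < 1/2"

lemma Smap_simps[simp]:
  "Smap p q 1 x = p*x" "Smap p q 2 x = q*x" "Smap p q 3 x = p*x+1-p" "Smap p q 4 x = q*x+1-q"
  by (simp_all add: Smap_def)

lemma four_cases: "i \<in> {1..4::nat} \<Longrightarrow> i = 1 \<or> i = 2 \<or> i = 3 \<or> i = 4" by auto

lemma Smap_lip:
  assumes "good p q" "i \<in> {1..4}"
  shows "dist (Smap p q i x) (Smap p q i y) \<le> max p q * dist x y"
proof -
  have "\<bar>p * x - p * y\<bar> = p * \<bar>x - y\<bar>" "\<bar>q * x - q * y\<bar> = q * \<bar>x - y\<bar>"
    using assms by (auto simp: good_def abs_mult right_diff_distrib[symmetric])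
  moreover have "p * \<bar>x - y\<bar> \<le> max p q * \<bar>x - y\<bar>" "q * \<bar>x - y\<bar> \<le> max p q * \<bar>x - y\<bar>"
    by (auto intro: mult_right_mono)
  moreover have "\<bar>(p * x + 1 - p) - (p * y + 1 - p)\<bar> = \<bar>p * x - p * y\<bar>" by simp
  moreover have "\<bar>(q * x + 1 - q) - (q * y + 1 - q)\<bar> = \<bar>q * x - q * y\<bar>" by simp
  ultimately show ?thesis using four_cases[OF assms(2)] unfolding dist_real_def
    by (elim disjE) (simp_all only: Smap_simps)
qed

lemma Smap_01: "good p q \<Longrightarrow> x \<in> {0..1} \<Longrightarrow> Smap p q i x \<in> {0..1}"
proof -
  assume a: "good p q" "x \<in> {0..1}"
  then have "0 \<le> p*x" "p * x \<le> p" "0 \<le> q*x" "q * x \<le> q" "p \<le> 1" "q \<le> 1"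
    by (auto simp: good_def intro: mult_left_le)
  then show ?thesis unfolding Smap_def by auto
qed

lemma Smap_cont: "continuous_on S (Smap p q i)"
proof -
  have "Smap p q i = (if i = 1 then (\<lambda>x. p*x) else if i = 2 then (\<lambda>x. q*x)
     else if i = 3 then (\<lambda>x. p*x+1-p) else (\<lambda>x. q*x+1-q))" by (auto simp: Smap_def fun_eq_iff)
  then show ?thesis by (auto intro!: continuous_intros)
qed

lemma K_exists:
  assumes "good p q"
  shows "\<exists>K. compact K \<and> K \<noteq> {} \<and> K = (\<Union>i\<in>{1..4}. Smap p q i ` K) \<and> 0 \<in> K \<and> K \<subseteq> {0..1}"
proof (rule attr_exists[where ia=1])
  show "Smap p q 1 0 = 0" by (simp add: Smap_def)
  show "\<And>i. i \<in> {1..4} \<Longrightarrow> Smap p q i ` {0..1} \<subseteq> {0..1}" using Smap_01[OF assms] by blast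
qed (auto intro: Smap_cont)

lemma K_unique:
  assumes "good p q" "compact K1" "K1 \<noteq> {}" "K1 = (\<Union>i\<in>{1..4}. Smap p q i ` K1)"
     "compact K2" "K2 \<noteq> {}" "K2 = (\<Union>i\<in>{1..4}. Smap p q i ` K2)"
  shows "K1 = K2"
proof (rule attr_unique[where c = "max p q" and I = "{1..4}" and T = "Smap p q"])
  show "0 \<le> max p q" "max p q < 1" using assms(1) by (auto simp: good_def)
  show "\<And>i x y. i \<in> {1..4} \<Longrightarrow> dist (Smap p q i x) (Smap p q i y) \<le> max p q * dist x y"
    using Smap_lip[OF assms(1)] by blast
qed (fact assms)+

lemma Kpq_props:
  assumes "good p q"
  shows "compact (Kpq p q)" "Kpq p q \<noteq> {}" "Kpq p q = (\<Union>i\<in>{1..4}. Smap p q i ` Kpq p q)"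
    "0 \<in> Kpq p q" "Kpq p q \<subseteq> {0..1}"
proof -
  obtain K where K: "compact K" "K \<noteq> {}" "K = (\<Union>i\<in>{1..4}. Smap p q i ` K)" "0 \<in> K" "K \<subseteq> {0..1}"
    using K_exists[OF assms] by blast
  have "Kpq p q = K" unfolding Kpq_def
  proof (rule the_equality)
    show "K \<noteq> {} \<and> compact K \<and> K = (\<Union>i\<in>{1..4}. Smap p q i ` K)" by (intro conjI K(1-3))
  next
    fix K' assume "K' \<noteq> {} \<and> compact K' \<and> K' = (\<Union>i\<in>{1..4}. Smap p q i ` K')"
    then show "K' = K" using K_unique[OF assms, of K' K] K(1-3) by (simp only: simp_thms)
  qed
  then show "compact (Kpq p q)" "Kpq p q \<noteq> {}" "Kpq p q = (\<Union>i\<in>{1..4}. Smap p q i ` Kpq p q)"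
    "0 \<in> Kpq p q" "Kpq p q \<subseteq> {0..1}" using K by simp_all
qed

lemma Kpq_eqI:
  assumes "good p q" "compact K" "K \<noteq> {}" "K = (\<Union>i\<in>{1..4}. Smap p q i ` K)"
  shows "K = Kpq p q"
  using K_unique[OF assms Kpq_props(1-3)[OF assms(1)]] .


lemma Smap_Suc0[simp]: "Smap p q (Suc 0) x = p*x" by (simp add: Smap_def)

lemma UN4: "(\<Union>i\<in>{1..4::nat}. F i) = F 1 \<union> F 2 \<union> F 3 \<union> F 4"
proof -
  have "{1..4::nat} = {1,2,3,4}" by auto
  then show ?thesis by auto
qed

lemma Kpq_inv4: "good p q \<Longrightarrow> Kpq p q = Smap p q 1 ` Kpq p q \<union> Smap p q 2 ` Kpq p q \<union> Smap p q 3 ` Kpq p q \<union> Smap p q 4 ` Kpq p q"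
  using Kpq_props(3)[of p q] unfolding UN4 by simp

lemma Kpq_eqI4:
  assumes "good p q" "compact K" "K \<noteq> {}" "K = Smap p q 1 ` K \<union> Smap p q 2 ` K \<union> Smap p q 3 ` K \<union> Smap p q 4 ` K"
  shows "K = Kpq p q"
  using Kpq_eqI[OF assms(1-3)] assms(4) unfolding UN4 by simp

lemma refl_img: "(\<lambda>x. 1 - x) ` (Smap p q 1 ` K) = Smap p q 3 ` ((\<lambda>x. 1 - x) ` K)"
   "(\<lambda>x. 1 - x) ` (Smap p q 2 ` K) = Smap p q 4 ` ((\<lambda>x. 1 - x) ` K)"
   "(\<lambda>x. 1 - x) ` (Smap p q 3 ` K) = Smap p q 1 ` ((\<lambda>x. 1 - x) ` K)"
   "(\<lambda>x. 1 - x) ` (Smap p q 4 ` K) = Smap p q 2 ` ((\<lambda>x. 1 - x) ` K)"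
  by (auto simp: image_image algebra_simps intro!: image_cong)

lemma Kpq_refl:
  assumes "good p q"
  shows "(\<lambda>x. 1 - x) ` Kpq p q = Kpq p q"
proof -
  let ?K = "Kpq p q" let ?R = "(\<lambda>x::real. 1 - x)"
  have "?R ` ?K = ?R ` (Smap p q 1 ` ?K \<union> Smap p q 2 ` ?K \<union> Smap p q 3 ` ?K \<union> Smap p q 4 ` ?K)"
    using Kpq_inv4[OF assms] by simp
  also have "\<dots> = Smap p q 1 ` (?R ` ?K) \<union> Smap p q 2 ` (?R ` ?K) \<union> Smap p q 3 ` (?R ` ?K) \<union> Smap p q 4 ` (?R ` ?K)"
    unfolding image_Un refl_img by blast
  finally have inv: "?R ` ?K = Smap p q 1 ` (?R ` ?K) \<union> Smap p q 2 ` (?R ` ?K) \<union> Smap p q 3 ` (?R ` ?K) \<union> Smap p q 4 ` (?R ` ?K)" .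
  have "compact (?R ` ?K)" using Kpq_props(1)[OF assms]
    by (intro compact_continuous_image continuous_intros)
  moreover have "?R ` ?K \<noteq> {}" using Kpq_props(2)[OF assms] by simp
  ultimately show ?thesis using Kpq_eqI4[OF assms _ _ inv] by blast
qed

lemma one_in_K: "good p q \<Longrightarrow> 1 \<in> Kpq p q"
  using Kpq_refl[of p q] Kpq_props(4)[of p q] by force

lemma Smap_in_K: "good p q \<Longrightarrow> x \<in> Kpq p q \<Longrightarrow> i \<in> {1..4} \<Longrightarrow> Smap p q i x \<in> Kpq p q"
  using Kpq_props(3)[of p q] by blast


definition TT :: "real \<Rightarrow> real \<Rightarrow> real \<Rightarrow> real \<Rightarrow> nat \<Rightarrow> real \<times> real \<Rightarrow> real \<times> real" where
  "TT p q p' q' i z = (Smap p q i (fst z), Smap p' q' i (snd z))"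

definition Gr :: "real \<Rightarrow> real \<Rightarrow> real \<Rightarrow> real \<Rightarrow> (real \<times> real) set" where
  "Gr p q p' q' = (THE G. G \<noteq> {} \<and> compact G \<and> G = (\<Union>i\<in>{1..4}. TT p q p' q' i ` G))"

lemma Smap_lin: "Smap p q i = (\<lambda>x. (if i = 1 then p else if i = 2 then q else if i = 3 then p else q) * x
   + (if i = 1 then 0 else if i = 2 then 0 else if i = 3 then 1 - p else 1 - q))"
  by (auto simp: Smap_def fun_eq_iff)

lemma TT_cont: "continuous_on S (TT p q p' q' i)"
  unfolding TT_def[abs_def] Smap_lin by (intro continuous_intros)

lemma TT_lip:
  assumes "good p q" "good p' q'" "i \<in> {1..4}"
  shows "dist (TT p q p' q' i z) (TT p q p' q' i w) \<le> max (max p q) (max p' q') * dist z w"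
proof -
  let ?c = "max (max p q) (max p' q')"
  obtain a b c d where zw: "z = (a,b)" "w = (c,d)" by (cases z, cases w)
  have c0: "0 \<le> ?c" using assms by (auto simp: good_def)
  have 1: "dist (Smap p q i a) (Smap p q i c) \<le> ?c * dist a c"
    using Smap_lip[OF assms(1,3), of a c] zero_le_dist[of a c] by (smt (verit) mult_right_mono max.cobounded1)
  have 2: "dist (Smap p' q' i b) (Smap p' q' i d) \<le> ?c * dist b d"
    using Smap_lip[OF assms(2,3), of b d] zero_le_dist[of b d] by (smt (verit) mult_right_mono max.cobounded2)
  have "(dist (Smap p q i a) (Smap p q i c))\<^sup>2 + (dist (Smap p' q' i b) (Smap p' q' i d))\<^sup>2
      \<le> (?c * dist a c)\<^sup>2 + (?c * dist b d)\<^sup>2"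
    using 1 2 by (intro add_mono power_mono) auto
  also have "\<dots> = ?c\<^sup>2 * ((dist a c)\<^sup>2 + (dist b d)\<^sup>2)" by (simp add: power_mult_distrib algebra_simps)
  finally have "sqrt ((dist (Smap p q i a) (Smap p q i c))\<^sup>2 + (dist (Smap p' q' i b) (Smap p' q' i d))\<^sup>2)
      \<le> sqrt (?c\<^sup>2 * ((dist a c)\<^sup>2 + (dist b d)\<^sup>2))" by (rule real_sqrt_le_mono)
  also have "\<dots> = ?c * sqrt ((dist a c)\<^sup>2 + (dist b d)\<^sup>2)" using c0 by (simp add: real_sqrt_mult)
  finally show ?thesis unfolding zw TT_def dist_Pair_Pair by simp
qed

lemma Gr_exists:
  assumes "good p q" "good p' q'"
  shows "\<exists>G. compact G \<and> G \<noteq> {} \<and> G = (\<Union>i\<in>{1..4}. TT p q p' q' i ` G) \<and> (0,0) \<in> G \<and> G \<subseteq> {0..1} \<times> {0..1}"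
proof (rule attr_exists[where ia=1])
  show "TT p q p' q' 1 (0,0) = (0,0)" by (simp add: TT_def Smap_def)
  show "\<And>i. i \<in> {1..4} \<Longrightarrow> TT p q p' q' i ` ({0..1} \<times> {0..1}) \<subseteq> {0..1} \<times> {0..1}"
    using Smap_01[OF assms(1)] Smap_01[OF assms(2)] by (auto simp: TT_def)
  show "compact ({0..1::real} \<times> {0..1::real})" by (intro compact_Times compact_Icc)
qed (auto intro: TT_cont)

lemma Gr_unique:
  assumes "good p q" "good p' q'" "compact K1" "K1 \<noteq> {}" "K1 = (\<Union>i\<in>{1..4}. TT p q p' q' i ` K1)"
     "compact K2" "K2 \<noteq> {}" "K2 = (\<Union>i\<in>{1..4}. TT p q p' q' i ` K2)"
  shows "K1 = K2"
proof (rule attr_unique[where c = "max (max p q) (max p' q')" and I = "{1..4}" and T = "TT p q p' q'"])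
  show "0 \<le> max (max p q) (max p' q')" "max (max p q) (max p' q') < 1" using assms(1,2) by (auto simp: good_def)
  show "\<And>i x y. i \<in> {1..4} \<Longrightarrow> dist (TT p q p' q' i x) (TT p q p' q' i y) \<le> max (max p q) (max p' q') * dist x y"
    using TT_lip[OF assms(1,2)] by blast
qed (fact assms)+

lemma Gr_props:
  assumes "good p q" "good p' q'"
  shows "compact (Gr p q p' q')" "Gr p q p' q' \<noteq> {}" "Gr p q p' q' = (\<Union>i\<in>{1..4}. TT p q p' q' i ` Gr p q p' q')"
    "Gr p q p' q' \<subseteq> {0..1} \<times> {0..1}"
proof -
  obtain K where K: "compact K" "K \<noteq> {}" "K = (\<Union>i\<in>{1..4}. TT p q p' q' i ` K)" "K \<subseteq> {0..1} \<times> {0..1}"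
    using Gr_exists[OF assms] by blast
  have "Gr p q p' q' = K" unfolding Gr_def
  proof (rule the_equality)
    show "K \<noteq> {} \<and> compact K \<and> K = (\<Union>i\<in>{1..4}. TT p q p' q' i ` K)" by (intro conjI K(1-3))
  next
    fix K' assume "K' \<noteq> {} \<and> compact K' \<and> K' = (\<Union>i\<in>{1..4}. TT p q p' q' i ` K')"
    then show "K' = K" using Gr_unique[OF assms, of K' K] K(1-3) by (simp only: simp_thms)
  qed
  then show "compact (Gr p q p' q')" "Gr p q p' q' \<noteq> {}" "Gr p q p' q' = (\<Union>i\<in>{1..4}. TT p q p' q' i ` Gr p q p' q')"
    "Gr p q p' q' \<subseteq> {0..1} \<times> {0..1}" using K by simp_all
qed

lemma Gr_inv4: "good p q \<Longrightarrow> good p' q' \<Longrightarrow> Gr p q p' q' = TT p q p' q' 1 ` Gr p q p' q' \<union> TT p q p' q' 2 ` Gr p q p' q' \<union> TT p q p' q' 3 ` Gr p q p' q' \<union> TT p q p' q' 4 ` Gr p q p' q'"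
  using Gr_props(3)[of p q p' q'] unfolding UN4 by simp

lemma Gr_eqI4:
  assumes "good p q" "good p' q'" "compact K" "K \<noteq> {}"
    "K = TT p q p' q' 1 ` K \<union> TT p q p' q' 2 ` K \<union> TT p q p' q' 3 ` K \<union> TT p q p' q' 4 ` K"
  shows "K = Gr p q p' q'"
  using Gr_unique[OF assms(1-4) _ Gr_props(1-3)[OF assms(1,2)]] assms(5) unfolding UN4 by simp

lemma fst_Gr: assumes "good p q" "good p' q'" shows "fst ` Gr p q p' q' = Kpq p q"
proof (rule Kpq_eqI4[OF assms(1)])
  let ?G = "Gr p q p' q'"
  show "compact (fst ` ?G)" using Gr_props(1)[OF assms] by (intro compact_continuous_image continuous_intros)
  show "fst ` ?G \<noteq> {}" using Gr_props(2)[OF assms] by simp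
  have e: "fst ` (TT p q p' q' i ` ?G) = Smap p q i ` (fst ` ?G)" for i
    by (simp add: image_image TT_def)
  have "fst ` ?G = fst ` (TT p q p' q' 1 ` ?G \<union> TT p q p' q' 2 ` ?G \<union> TT p q p' q' 3 ` ?G \<union> TT p q p' q' 4 ` ?G)"
    using Gr_inv4[OF assms] by simp
  then show "fst ` ?G = Smap p q 1 ` (fst ` ?G) \<union> Smap p q 2 ` (fst ` ?G) \<union> Smap p q 3 ` (fst ` ?G) \<union> Smap p q 4 ` (fst ` ?G)"
    unfolding image_Un e .
qed

lemma snd_Gr: assumes "good p q" "good p' q'" shows "snd ` Gr p q p' q' = Kpq p' q'"
proof (rule Kpq_eqI4[OF assms(2)])
  let ?G = "Gr p q p' q'"
  show "compact (snd ` ?G)" using Gr_props(1)[OF assms] by (intro compact_continuous_image continuous_intros)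
  show "snd ` ?G \<noteq> {}" using Gr_props(2)[OF assms] by simp
  have e: "snd ` (TT p q p' q' i ` ?G) = Smap p' q' i ` (snd ` ?G)" for i
    by (simp add: image_image TT_def)
  have "snd ` ?G = snd ` (TT p q p' q' 1 ` ?G \<union> TT p q p' q' 2 ` ?G \<union> TT p q p' q' 3 ` ?G \<union> TT p q p' q' 4 ` ?G)"
    using Gr_inv4[OF assms] by simp
  then show "snd ` ?G = Smap p' q' 1 ` (snd ` ?G) \<union> Smap p' q' 2 ` (snd ` ?G) \<union> Smap p' q' 3 ` (snd ` ?G) \<union> Smap p' q' 4 ` (snd ` ?G)"
    unfolding image_Un e .
qed


lemma swap_Gr: assumes "good p q" "good p' q'" shows "prod.swap ` Gr p q p' q' = Gr p' q' p q"
proof (rule Gr_eqI4[OF assms(2,1)])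
  let ?G = "Gr p q p' q'"
  show "compact (prod.swap ` ?G)" using Gr_props(1)[OF assms] by (intro compact_continuous_image continuous_intros)
  show "prod.swap ` ?G \<noteq> {}" using Gr_props(2)[OF assms] by simp
  have e: "prod.swap ` (TT p q p' q' i ` ?G) = TT p' q' p q i ` (prod.swap ` ?G)" for i
    by (simp add: image_image TT_def)
  have "prod.swap ` ?G = prod.swap ` (TT p q p' q' 1 ` ?G \<union> TT p q p' q' 2 ` ?G \<union> TT p q p' q' 3 ` ?G \<union> TT p q p' q' 4 ` ?G)"
    using Gr_inv4[OF assms] by simp
  then show "prod.swap ` ?G = TT p' q' p q 1 ` (prod.swap ` ?G) \<union> TT p' q' p q 2 ` (prod.swap ` ?G) \<union> TT p' q' p q 3 ` (prod.swap ` ?G) \<union> TT p' q' p q 4 ` (prod.swap ` ?G)"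
    unfolding image_Un e .
qed

definition RR :: "real \<times> real \<Rightarrow> real \<times> real" where "RR z = (1 - fst z, 1 - snd z)"

lemma RR_img: "RR ` (TT p q p' q' 1 ` K) = TT p q p' q' 3 ` (RR ` K)"
   "RR ` (TT p q p' q' 2 ` K) = TT p q p' q' 4 ` (RR ` K)"
   "RR ` (TT p q p' q' 3 ` K) = TT p q p' q' 1 ` (RR ` K)"
   "RR ` (TT p q p' q' 4 ` K) = TT p q p' q' 2 ` (RR ` K)"
  by (auto simp: image_image algebra_simps RR_def TT_def intro!: image_cong)

lemma RR_Gr: assumes "good p q" "good p' q'" shows "RR ` Gr p q p' q' = Gr p q p' q'"
proof (rule Gr_eqI4[OF assms])
  let ?G = "Gr p q p' q'"
  show "compact (RR ` ?G)" using Gr_props(1)[OF assms] unfolding RR_def[abs_def]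
    by (intro compact_continuous_image continuous_intros)
  show "RR ` ?G \<noteq> {}" using Gr_props(2)[OF assms] by simp
  have "RR ` ?G = RR ` (TT p q p' q' 1 ` ?G \<union> TT p q p' q' 2 ` ?G \<union> TT p q p' q' 3 ` ?G \<union> TT p q p' q' 4 ` ?G)"
    using Gr_inv4[OF assms] by simp
  then show "RR ` ?G = TT p q p' q' 1 ` (RR ` ?G) \<union> TT p q p' q' 2 ` (RR ` ?G) \<union> TT p q p' q' 3 ` (RR ` ?G) \<union> TT p q p' q' 4 ` (RR ` ?G)"
    unfolding image_Un RR_img by blast
qed


lemma pow1: "(Smap p q 1 ^^ n) x = p^n * x" by (induction n) (auto simp: Smap_def)
lemma pow2: "(Smap p q 2 ^^ n) x = q^n * x" by (induction n) (auto simp: Smap_def)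

lemma good_m: "good p q \<Longrightarrow> 0 < max p q \<and> max p q < 1/2" by (auto simp: good_def)

lemma A_sub: assumes "good p q" shows "Apq p q \<subseteq> {1 - max p q..1}"
proof
  fix z assume "z \<in> Apq p q"
  then obtain u where u: "u \<in> Kpq p q" "z = Smap p q 3 u \<or> z = Smap p q 4 u" unfolding Apq_def by blast
  then have "0 \<le> u" "u \<le> 1" using Kpq_props(5)[OF assms] by auto
  then have "0 \<le> p*u" "p*u \<le> p" "0 \<le> q*u" "q*u \<le> q" using assms by (auto simp: good_def intro: mult_left_le)
  then show "z \<in> {1 - max p q..1}" using u(2) by auto
qed

lemma pq_pow_le: assumes "good p q" shows "p^a*q^b \<le> (max p q)^(a+b)"
proof -
  have "p^a \<le> (max p q)^a" "q^b \<le> (max p q)^b" using assms by (auto simp: good_def intro: power_mono)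
  then have "p^a*q^b \<le> (max p q)^a * (max p q)^b" using assms by (intro mult_mono) (auto simp: good_def)
  then show ?thesis by (simp add: power_add)
qed

lemma pq_pow_le1: assumes "good p q" "a + b \<ge> 1" shows "p^a*q^b \<le> max p q"
proof -
  have "(max p q)^(a+b) \<le> (max p q)^1" using assms good_m[OF assms(1)]
    by (intro power_decreasing) auto
  then show ?thesis using pq_pow_le[OF assms(1), of a b] by simp
qed

lemma pq_pos: "good p q \<Longrightarrow> 0 < p^a*q^b" by (auto simp: good_def)

lemma pq_le1: assumes "good p q" shows "p^a*q^b \<le> 1"
proof -
  have "(max p q)^(a+b) \<le> 1" using good_m[OF assms] by (intro power_le_one) auto
  then show ?thesis using pq_pow_le[OF assms, of a b] by simp
qed

lemma core:
  assumes g: "good p q" and tw: "twofold p q" and z: "z1 \<in> Apq p q" "z2 \<in> Apq p q"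
    and e: "p^a*q^b*z1 = p^c*q^d*z2" and ac: "a=0 \<or> c=0" and bd: "b=0 \<or> d=0"
  shows "a=0 \<and> b=0 \<and> c=0 \<and> d=0"
proof -
  let ?m = "max p q"
  have m: "0 < ?m" "?m < 1/2" using good_m[OF g] by auto
  have z1b: "1 - ?m \<le> z1" "z1 \<le> 1" and z2b: "1 - ?m \<le> z2" "z2 \<le> 1" using A_sub[OF g] z by auto
  have small1: "p^a*q^b*z1 \<le> ?m" if "a + b \<ge> 1"
  proof -
    have "p^a*q^b*z1 \<le> p^a*q^b*1" using z1b pq_pos[OF g, of a b] by (intro mult_left_mono) auto
    then show ?thesis using pq_pow_le1[OF g that] by simp
  qed
  have small2: "p^c*q^d*z2 \<le> ?m" if "c + d \<ge> 1"
  proof -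
    have "p^c*q^d*z2 \<le> p^c*q^d*1" using z2b pq_pos[OF g, of c d] by (intro mult_left_mono) auto
    then show ?thesis using pq_pow_le1[OF g that] by simp
  qed
  have twc: "((Smap p q 1) ^^ k) ` Apq p q \<inter> ((Smap p q 2) ^^ l) ` Apq p q = {}" if "k \<ge> 1" "l \<ge> 1" for k l
    using tw that unfolding twofold_def by blast
  show ?thesis
  proof (cases "a = 0 \<and> b = 0")
    case True
    show ?thesis
    proof (rule ccontr)
      assume "\<not> ?thesis"
      then have "c + d \<ge> 1" using True by auto
      then show False using small2 e True z1b m by auto
    qed
  next
    case F1: False
    show ?thesis
    proof (cases "c = 0 \<and> d = 0")
      case True
      then have "a + b \<ge> 1" using F1 by auto
      then show ?thesis using small1 e True z2b m by auto
    next
      case F2: False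
      show ?thesis
      proof (cases "a = 0")
        case True
        then have "b \<ge> 1" "d = 0" "c \<ge> 1" using F1 F2 bd by auto
        then have "q^b*z1 = p^c*z2" using e True by simp
        moreover have "p^c*z2 \<in> ((Smap p q 1) ^^ c) ` Apq p q" by (rule image_eqI[OF pow1[symmetric] z(2)])
        moreover have "q^b*z1 \<in> ((Smap p q 2) ^^ b) ` Apq p q" by (rule image_eqI[OF pow2[symmetric] z(1)])
        ultimately show ?thesis using twc[of c b] \<open>b \<ge> 1\<close> \<open>c \<ge> 1\<close> by (metis IntI empty_iff)
      next
        case False
        then have "c = 0" "d \<ge> 1" "b = 0" "a \<ge> 1" using F1 F2 bd ac by auto
        then have "p^a*z1 = q^d*z2" using e by simp
        moreover have "p^a*z1 \<in> ((Smap p q 1) ^^ a) ` Apq p q" by (rule image_eqI[OF pow1[symmetric] z(1)])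
        moreover have "q^d*z2 \<in> ((Smap p q 2) ^^ d) ` Apq p q" by (rule image_eqI[OF pow2[symmetric] z(2)])
        ultimately show ?thesis using twc[of a d] \<open>a \<ge> 1\<close> \<open>d \<ge> 1\<close> by (metis IntI empty_iff)
      qed
    qed
  qed
qed

lemma pieces_unique:
  assumes g: "good p q" and tw: "twofold p q" and z: "z1 \<in> Apq p q" "z2 \<in> Apq p q"
    and e: "p^a*q^b*z1 = p^c*q^d*z2"
  shows "a = c \<and> b = d"
proof -
  define a0 where "a0 = min a c"
  define b0 where "b0 = min b d"
  have pa: "p^a = p^a0 * p^(a-a0)" "p^c = p^a0 * p^(c-a0)" unfolding a0_def by (simp_all flip: power_add)
  have qb: "q^b = q^b0 * q^(b-b0)" "q^d = q^b0 * q^(d-b0)" unfolding b0_def by (simp_all flip: power_add)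
  have pos: "p^a0 * q^b0 \<noteq> 0" using g by (auto simp: good_def)
  have "(p^a0 * q^b0) * (p^(a-a0)*q^(b-b0)*z1) = (p^a0 * q^b0) * (p^(c-a0)*q^(d-b0)*z2)"
    using e unfolding pa qb by (simp add: algebra_simps)
  then have "p^(a-a0)*q^(b-b0)*z1 = p^(c-a0)*q^(d-b0)*z2" by (rule mult_left_cancel[THEN iffD1, OF pos])
  moreover have "a - a0 = 0 \<or> c - a0 = 0" "b - b0 = 0 \<or> d - b0 = 0" unfolding a0_def b0_def by auto
  ultimately have "a - a0 = 0 \<and> b - b0 = 0 \<and> c - a0 = 0 \<and> d - b0 = 0" using core[OF g tw z] by blast
  then show ?thesis unfolding a0_def b0_def by auto
qed

lemma Gr_cases:
  assumes gg: "good p q" "good p' q'" and uv: "(u,v) \<in> Gr p q p' q'"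
  obtains i u' v' where "i \<in> {1,2,3,4}" "(u',v') \<in> Gr p q p' q'" "u = Smap p q i u'" "v = Smap p' q' i v'"
proof -
  let ?G = "Gr p q p' q'"
  have "?G \<subseteq> TT p q p' q' 1 ` ?G \<union> TT p q p' q' 2 ` ?G \<union> TT p q p' q' 3 ` ?G \<union> TT p q p' q' 4 ` ?G"
    using equalityD1[OF Gr_inv4[OF gg]] .
  with uv have "(u,v) \<in> TT p q p' q' 1 ` ?G \<union> TT p q p' q' 2 ` ?G \<union> TT p q p' q' 3 ` ?G \<union> TT p q p' q' 4 ` ?G"
    by (rule subsetD[rotated])
  then obtain i z where "i \<in> {1,2,3,4}" "z \<in> ?G" "(u,v) = TT p q p' q' i z" by blast
  then show ?thesis using that[of i "fst z" "snd z"] by (auto simp: TT_def)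
qed

lemma TT_in_Gr:
  assumes gg: "good p q" "good p' q'" and uv: "(u,v) \<in> Gr p q p' q'" and i: "i \<in> {1..4}"
  shows "(Smap p q i u, Smap p' q' i v) \<in> Gr p q p' q'"
proof -
  let ?G = "Gr p q p' q'"
  have "TT p q p' q' i ` ?G \<subseteq> (\<Union>i\<in>{1..4}. TT p q p' q' i ` ?G)" using i by blast
  also have "\<dots> = ?G" using Gr_props(3)[OF gg] by (rule sym)
  finally show ?thesis using uv by (force simp: TT_def)
qed

definition GA :: "real \<Rightarrow> real \<Rightarrow> real \<Rightarrow> real \<Rightarrow> (real \<times> real) set" where
  "GA p q p' q' = TT p q p' q' 3 ` Gr p q p' q' \<union> TT p q p' q' 4 ` Gr p q p' q'"

lemma GA_sub:
  assumes gg: "good p q" "good p' q'" and zw: "(z,w) \<in> GA p q p' q'"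
  shows "z \<in> Apq p q" "(z,w) \<in> Gr p q p' q'"
proof -
  obtain i u v where i: "i = 3 \<or> i = 4" "(u,v) \<in> Gr p q p' q'" "z = Smap p q i u" "w = Smap p' q' i v"
  proof -
    from zw obtain i r where "i = 3 \<or> i = 4" "r \<in> Gr p q p' q'" "(z,w) = TT p q p' q' i r"
      unfolding GA_def by blast
    then show ?thesis using that[of i "fst r" "snd r"] by (auto simp: TT_def)
  qed
  have "u \<in> Kpq p q" using fst_Gr[OF gg] i(2) by force
  then show "z \<in> Apq p q" using i unfolding Apq_def by auto
  show "(z,w) \<in> Gr p q p' q'" using TT_in_Gr[OF gg i(2), of i] i by auto
qed

lemma G_01: assumes gg: "good p q" "good p' q'" and "(x,y) \<in> Gr p q p' q'"
  shows "0 \<le> x" "x \<le> 1" "0 \<le> y" "y \<le> 1"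
  using Gr_props(4)[OF gg] assms(3) by auto

lemma PL_aux:
  assumes gg: "good p q" "good p' q'" and xy: "(x,y) \<in> Gr p q p' q'"
  shows "(\<exists>a b z w. (z,w) \<in> GA p q p' q' \<and> x = p^a*q^b*z \<and> y = p' ^ a * q' ^ b * w) \<or>
         (\<exists>a b u v. a + b = n \<and> (u,v) \<in> Gr p q p' q' \<and> x = p^a*q^b*u \<and> y = p' ^ a * q' ^ b * v)"
proof (induction n)
  case 0
  show ?case using xy by (intro disjI2 exI[of _ 0] exI[of _ x] exI[of _ y]) auto
next
  case (Suc n)
  show ?case
  proof (cases "\<exists>a b z w. (z,w) \<in> GA p q p' q' \<and> x = p^a*q^b*z \<and> y = p' ^ a * q' ^ b * w")
    case True then show ?thesis by blast
  next
    case False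
    with Suc obtain a b u v where abuv: "a + b = n" "(u,v) \<in> Gr p q p' q'" "x = p^a*q^b*u" "y = p' ^ a * q' ^ b * v"
      by blast
    from Gr_cases[OF gg abuv(2)] obtain i u' v' where
      i: "i \<in> {1,2,3,4}" "(u',v') \<in> Gr p q p' q'" "u = Smap p q i u'" "v = Smap p' q' i v'" .
    consider "i = 1" | "i = 2" | "i = 3 \<or> i = 4" using i(1) by auto
    then show ?thesis
    proof cases
      case 1
      then show ?thesis using abuv i
        by (intro disjI2 exI[of _ "Suc a"] exI[of _ b] exI[of _ u'] exI[of _ v']) (auto simp: Smap_def)
    next
      case 2
      then show ?thesis using abuv i
        by (intro disjI2 exI[of _ a] exI[of _ "Suc b"] exI[of _ u'] exI[of _ v']) (auto simp: Smap_def)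
    next
      case 3
      then have "(u,v) \<in> GA p q p' q'" using i unfolding GA_def TT_def by force
      then show ?thesis using abuv by blast
    qed
  qed
qed

lemma PL:
  assumes gg: "good p q" "good p' q'" and xy: "(x,y) \<in> Gr p q p' q'" and x0: "x \<noteq> 0"
  shows "\<exists>a b z w. (z,w) \<in> GA p q p' q' \<and> x = p^a*q^b*z \<and> y = p' ^ a * q' ^ b * w"
proof -
  let ?m = "max p q"
  have "x > 0" using G_01[OF gg xy] x0 by auto
  have "?m < 1" using good_m[OF gg(1)] by linarith
  obtain n where n: "?m ^ n < x" using real_arch_pow_inv[OF \<open>x>0\<close> \<open>?m < 1\<close>] by blast
  have "\<not> (\<exists>a b u v. a + b = n \<and> (u,v) \<in> Gr p q p' q' \<and> x = p^a*q^b*u \<and> y = p' ^ a * q' ^ b * v)"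
  proof
    assume "\<exists>a b u v. a + b = n \<and> (u,v) \<in> Gr p q p' q' \<and> x = p^a*q^b*u \<and> y = p' ^ a * q' ^ b * v"
    then obtain a b u v where abuv: "a + b = n" "(u,v) \<in> Gr p q p' q'" "x = p^a*q^b*u" by blast
    have "p^a*q^b*u \<le> p^a*q^b*1" using G_01[OF gg abuv(2)] pq_pos[OF gg(1), of a b] by (intro mult_left_mono) auto
    then have "x \<le> ?m ^ n" using pq_pow_le[OF gg(1), of a b] abuv by simp
    then show False using n by simp
  qed
  then show ?thesis using PL_aux[OF gg xy, of n] by blast
qed

lemma PL0:
  assumes gg: "good p q" "good p' q'" and xy: "(x,y) \<in> Gr p q p' q'" and x0: "x = 0"
  shows "y = 0"
proof (rule ccontr)
  let ?m = "max p q" let ?m' = "max p' q'"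
  assume "y \<noteq> 0"
  then have "y > 0" using G_01[OF gg xy] by auto
  have "?m' < 1" using good_m[OF gg(2)] by linarith
  obtain n where n: "?m' ^ n < y" using real_arch_pow_inv[OF \<open>y>0\<close> \<open>?m' < 1\<close>] by blast
  have "\<not> (\<exists>a b z w. (z,w) \<in> GA p q p' q' \<and> x = p^a*q^b*z \<and> y = p' ^ a * q' ^ b * w)"
  proof
    assume "\<exists>a b z w. (z,w) \<in> GA p q p' q' \<and> x = p^a*q^b*z \<and> y = p' ^ a * q' ^ b * w"
    then obtain a b z w where abzw: "(z,w) \<in> GA p q p' q'" "x = p^a*q^b*z" by blast
    have "z \<ge> 1 - ?m" using A_sub[OF gg(1)] GA_sub(1)[OF gg abzw(1)] by auto
    then have "z > 0" using good_m[OF gg(1)] by auto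
    then have "x > 0" using abzw(2) pq_pos[OF gg(1), of a b] by simp
    then show False using x0 by simp
  qed
  then obtain a b u v where abuv: "a + b = n" "(u,v) \<in> Gr p q p' q'" "y = p' ^ a * q' ^ b * v"
    using PL_aux[OF gg xy, of n] by blast
  have "p' ^ a * q' ^ b * v \<le> p' ^ a * q' ^ b * 1" using G_01[OF gg abuv(2)] pq_pos[OF gg(2), of a b] by (intro mult_left_mono) auto
  then have "y \<le> ?m' ^ n" using pq_pow_le[OF gg(2), of a b] abuv by simp
  then show False using n by simp
qed


lemma FL_aux:
  assumes gg: "good p q" "good p' q'" and tw: "twofold p q"
  shows "\<forall>x y y'. (x,y) \<in> Gr p q p' q' \<longrightarrow> (x,y') \<in> Gr p q p' q' \<longrightarrow> \<bar>y - y'\<bar> \<le> (max p' q')^n"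
proof (induction n)
  case 0
  show ?case
  proof (intro allI impI)
    fix x y y' assume "(x,y) \<in> Gr p q p' q'" "(x,y') \<in> Gr p q p' q'"
    then have "0 \<le> y" "y \<le> 1" "0 \<le> y'" "y' \<le> 1" using G_01[OF gg] by blast+
    then show "\<bar>y - y'\<bar> \<le> (max p' q')^0" unfolding abs_le_iff by simp
  qed
next
  case (Suc n)
  let ?m = "max p q" let ?m' = "max p' q'"
  let ?G = "Gr p q p' q'"
  have m: "0 < ?m" "?m < 1/2" using good_m[OF gg(1)] by auto
  have m': "0 < ?m'" "?m' < 1/2" using good_m[OF gg(2)] by auto
  show ?case
  proof (intro allI impI)
    fix x y y' assume xy: "(x,y) \<in> ?G" and xy': "(x,y') \<in> ?G"
    show "\<bar>y - y'\<bar> \<le> ?m'^Suc n"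
    proof (cases "x = 0")
      case True
      then have "y = 0" "y' = 0" using PL0[OF gg xy] PL0[OF gg xy'] by auto
      then show ?thesis using m' by simp
    next
      case False
      obtain a b z w where abzw: "(z,w) \<in> GA p q p' q'" "x = p^a*q^b*z" "y = p' ^ a * q' ^ b * w"
        using PL[OF gg xy False] by blast
      obtain a2 b2 z2 w2 where abzw2: "(z2,w2) \<in> GA p q p' q'" "x = p^a2*q^b2*z2" "y' = p' ^ a2 * q' ^ b2 * w2"
        using PL[OF gg xy' False] by blast
      have zA: "z \<in> Apq p q" "z2 \<in> Apq p q" using GA_sub(1)[OF gg abzw(1)] GA_sub(1)[OF gg abzw2(1)] by auto
      have e1: "p^a*q^b*z = p^a2*q^b2*z2" using abzw(2) abzw2(2) by simp
      have "a = a2 \<and> b = b2" using pieces_unique[OF gg(1) tw zA e1] .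
      then have ab: "a2 = a" "b2 = b" by auto
      have "p^a*q^b*z = p^a*q^b*z2" using e1[unfolded ab] .
      moreover have "p^a*q^b \<noteq> 0" using pq_pos[OF gg(1), of a b] by (metis less_irrefl)
      ultimately have "z = z2" using mult_left_cancel by blast
      then have zz: "z2 = z" by simp
      have zwG: "(z,w) \<in> ?G" "(z,w2) \<in> ?G" using GA_sub(2)[OF gg abzw(1)] GA_sub(2)[OF gg abzw2(1)] zz by auto
      have zlo: "1 - ?m \<le> z" using A_sub[OF gg(1)] zA by auto
      have RG: "(1 - z, 1 - w) \<in> ?G" "(1 - z, 1 - w2) \<in> ?G"
        using imageI[OF zwG(1), of RR] imageI[OF zwG(2), of RR] unfolding RR_Gr[OF gg] by (simp_all add: RR_def)
      have ww: "\<bar>w - w2\<bar> \<le> ?m'^Suc n"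
      proof (cases "1 - z = 0")
        case True
        then have "1 - w = 0" "1 - w2 = 0" using PL0[OF gg RG(1)] PL0[OF gg RG(2)] by auto
        then show ?thesis using m' by simp
      next
        case False
        obtain c d z3 w3 where cd: "(z3,w3) \<in> GA p q p' q'" "1 - z = p^c*q^d*z3" "1 - w = p' ^ c * q' ^ d * w3"
          using PL[OF gg RG(1) False] by blast
        obtain c2 d2 z4 w4 where cd2: "(z4,w4) \<in> GA p q p' q'" "1 - z = p^c2*q^d2*z4" "1 - w2 = p' ^ c2 * q' ^ d2 * w4"
          using PL[OF gg RG(2) False] by blast
        have zA': "z3 \<in> Apq p q" "z4 \<in> Apq p q" using GA_sub(1)[OF gg cd(1)] GA_sub(1)[OF gg cd2(1)] by auto
        have e2: "p^c*q^d*z3 = p^c2*q^d2*z4" using cd(2) cd2(2) by simp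
        have "c = c2 \<and> d = d2" using pieces_unique[OF gg(1) tw zA' e2] .
        then have cc: "c2 = c" "d2 = d" by auto
        have "p^c*q^d*z3 = p^c*q^d*z4" using e2[unfolded cc] .
        moreover have "p^c*q^d \<noteq> 0" using pq_pos[OF gg(1), of c d] by (metis less_irrefl)
        ultimately have "z3 = z4" using mult_left_cancel by blast
        then have zz': "z4 = z3" by simp
        have "c + d \<ge> 1"
        proof (rule ccontr)
          assume "\<not> c + d \<ge> 1"
          then have "c = 0" "d = 0" by auto
          then have "1 - z = z3" using cd(2) by simp
          moreover have "1 - ?m \<le> z3" using A_sub[OF gg(1)] zA' by auto
          ultimately show False using zlo m by linarith
        qed
        have "(z3,w4) \<in> ?G" using GA_sub(2)[OF gg cd2(1)] zz' by simp
        from Suc.IH[rule_format, OF GA_sub(2)[OF gg cd(1)] this]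
        have IH: "\<bar>w3 - w4\<bar> \<le> ?m'^n" .
        have "w - w2 = p' ^ c * q' ^ d * (w4 - w3)" using cd(3) cd2(3) cc by (simp add: algebra_simps)
        then have "\<bar>w - w2\<bar> = \<bar>p' ^ c * q' ^ d\<bar> * \<bar>w4 - w3\<bar>" by (simp only: abs_mult[of "p' ^ c * q' ^ d"])
        then have "\<bar>w - w2\<bar> = p' ^ c * q' ^ d * \<bar>w3 - w4\<bar>"
          unfolding abs_of_pos[OF pq_pos[OF gg(2), of c d]] abs_minus_commute[of w4] .
        also have "\<dots> \<le> ?m' * ?m'^n" using pq_pow_le1[OF gg(2) \<open>c + d \<ge> 1\<close>] IH m'
          by (intro mult_mono) auto
        finally show ?thesis by simp
      qed
      have "y - y' = p' ^ a * q' ^ b * (w - w2)" using abzw(3) abzw2(3) ab by (simp add: algebra_simps)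
      then have "\<bar>y - y'\<bar> = \<bar>p' ^ a * q' ^ b\<bar> * \<bar>w - w2\<bar>" by (simp only: abs_mult[of "p' ^ a * q' ^ b"])
      then have "\<bar>y - y'\<bar> = p' ^ a * q' ^ b * \<bar>w - w2\<bar>"
        unfolding abs_of_pos[OF pq_pos[OF gg(2), of a b]] .
      also have "\<dots> \<le> 1 * \<bar>w - w2\<bar>" using pq_le1[OF gg(2), of a b] by (intro mult_right_mono) auto
      finally show ?thesis using ww by simp
    qed
  qed
qed

lemma FL:
  assumes gg: "good p q" "good p' q'" and tw: "twofold p q"
    and xy: "(x,y) \<in> Gr p q p' q'" and xy': "(x,y') \<in> Gr p q p' q'"
  shows "y = y'"
proof (rule ccontr)
  let ?m' = "max p' q'"
  assume "y \<noteq> y'"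
  then have pos: "\<bar>y - y'\<bar> > 0" by simp
  have "?m' < 1" using good_m[OF gg(2)] by linarith
  obtain n where n: "?m' ^ n < \<bar>y - y'\<bar>" using real_arch_pow_inv[OF pos \<open>?m' < 1\<close>] by blast
  moreover have "\<bar>y - y'\<bar> \<le> ?m'^n" using FL_aux[OF gg tw, of n, rule_format, OF xy xy'] .
  ultimately show False by linarith
qed


definition fmap :: "real \<Rightarrow> real \<Rightarrow> real \<Rightarrow> real \<Rightarrow> real \<Rightarrow> real" where
  "fmap p q p' q' x = (THE y. (x,y) \<in> Gr p q p' q')"

lemma fmap_eq:
  assumes gg: "good p q" "good p' q'" and tw: "twofold p q" and xy: "(x,y) \<in> Gr p q p' q'"
  shows "fmap p q p' q' x = y"
  unfolding fmap_def
proof (rule the_equality)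
  show "(x,y) \<in> Gr p q p' q'" by (fact xy)
  fix y' assume "(x,y') \<in> Gr p q p' q'"
  from FL[OF gg tw xy this] show "y' = y" by (rule sym)
qed

lemma fmap_graph:
  assumes gg: "good p q" "good p' q'" and tw: "twofold p q" and x: "x \<in> Kpq p q"
  shows "(x, fmap p q p' q' x) \<in> Gr p q p' q'"
proof -
  have "x \<in> fst ` Gr p q p' q'" using x unfolding fst_Gr[OF gg] .
  then obtain z where z: "z \<in> Gr p q p' q'" "x = fst z" by (rule imageE)
  then have xy: "(x, snd z) \<in> Gr p q p' q'" by simp
  have "fmap p q p' q' x = snd z" by (rule fmap_eq[OF gg tw xy])
  then show ?thesis using xy by simp
qed

lemma fmap_in:
  assumes gg: "good p q" "good p' q'" and tw: "twofold p q" and x: "x \<in> Kpq p q"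
  shows "fmap p q p' q' x \<in> Kpq p' q'"
proof -
  have "snd (x, fmap p q p' q' x) \<in> snd ` Gr p q p' q'" by (rule imageI[OF fmap_graph[OF assms]])
  then show ?thesis unfolding snd_Gr[OF gg] by simp
qed

lemma fmap_cont:
  assumes gg: "good p q" "good p' q'" and tw: "twofold p q"
  shows "continuous_on (Kpq p q) (fmap p q p' q')"
proof (rule continuous_from_closed_graph)
  show "compact (Kpq p' q')" using Kpq_props(1)[OF gg(2)] .
  show "fmap p q p' q' \<in> Kpq p q \<rightarrow> Kpq p' q'" using fmap_in[OF assms] by blast
  have "(\<lambda>x. (x, fmap p q p' q' x)) ` Kpq p q = Gr p q p' q'"
  proof
    show "(\<lambda>x. (x, fmap p q p' q' x)) ` Kpq p q \<subseteq> Gr p q p' q'" using fmap_graph[OF assms] by blast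
    show "Gr p q p' q' \<subseteq> (\<lambda>x. (x, fmap p q p' q' x)) ` Kpq p q"
    proof
      fix z assume z: "z \<in> Gr p q p' q'"
      obtain x y where xy: "z = (x,y)" by (cases z)
      have "x \<in> Kpq p q" using z xy fst_Gr[OF gg] by force
      moreover have "fmap p q p' q' x = y" using fmap_eq[OF assms] z xy by simp
      ultimately show "z \<in> (\<lambda>x. (x, fmap p q p' q' x)) ` Kpq p q" using xy by force
    qed
  qed
  then show "closed ((\<lambda>x. (x, fmap p q p' q' x)) ` Kpq p q)"
    using compact_imp_closed[OF Gr_props(1)[OF gg]] by simp
qed

lemma swap_mem:
  assumes gg: "good p q" "good p' q'"
  shows "(x,y) \<in> Gr p q p' q' \<longleftrightarrow> (y,x) \<in> Gr p' q' p q"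
proof -
  have "(y,x) \<in> prod.swap ` Gr p q p' q' \<longleftrightarrow> (x,y) \<in> Gr p q p' q'" by force
  then show ?thesis unfolding swap_Gr[OF gg] by simp
qed

theorem part_i:
  assumes gg: "good p q" "good p' q'" and tw: "twofold p q" "twofold p' q'"
  shows "\<exists>f g. homeomorphism (Kpq p q) (Kpq p' q') f g \<and>
            (\<forall>x\<in>Kpq p q. \<forall>i\<in>{1..4::nat}. f (Smap p q i x) = Smap p' q' i (f x))"
proof (intro exI conjI)
  let ?f = "fmap p q p' q'" let ?g = "fmap p' q' p q"
  let ?K = "Kpq p q" let ?K' = "Kpq p' q'"
  have gf: "?g (?f x) = x" if "x \<in> ?K" for x
  proof -
    have "(?f x, x) \<in> Gr p' q' p q" using fmap_graph[OF gg tw(1) that] swap_mem[OF gg] by blast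
    then show ?thesis by (rule fmap_eq[OF gg(2,1) tw(2)])
  qed
  have fg: "?f (?g y) = y" if "y \<in> ?K'" for y
  proof -
    have "(?g y, y) \<in> Gr p q p' q'" using fmap_graph[OF gg(2,1) tw(2) that] swap_mem[OF gg] by blast
    then show ?thesis by (rule fmap_eq[OF gg tw(1)])
  qed
  have im1: "?f ` ?K = ?K'"
  proof
    show "?f ` ?K \<subseteq> ?K'" using fmap_in[OF gg tw(1)] by blast
    show "?K' \<subseteq> ?f ` ?K"
    proof
      fix y assume y: "y \<in> ?K'"
      show "y \<in> ?f ` ?K" using fg[OF y] fmap_in[OF gg(2,1) tw(2) y] by (metis image_eqI)
    qed
  qed
  have im2: "?g ` ?K' = ?K"
  proof
    show "?g ` ?K' \<subseteq> ?K" using fmap_in[OF gg(2,1) tw(2)] by blast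
    show "?K \<subseteq> ?g ` ?K'"
    proof
      fix x assume x: "x \<in> ?K"
      show "x \<in> ?g ` ?K'" using gf[OF x] fmap_in[OF gg tw(1) x] by (metis image_eqI)
    qed
  qed
  show "homeomorphism ?K ?K' ?f ?g"
    unfolding homeomorphism_def
    using gf fg im1 im2 fmap_cont[OF gg tw(1)] fmap_cont[OF gg(2,1) tw(2)] by blast
  show "\<forall>x\<in>?K. \<forall>i\<in>{1..4::nat}. ?f (Smap p q i x) = Smap p' q' i (?f x)"
  proof (intro ballI)
    fix x i assume x: "x \<in> ?K" and i: "i \<in> {1..4::nat}"
    show "?f (Smap p q i x) = Smap p' q' i (?f x)"
      using fmap_eq[OF gg tw(1) TT_in_Gr[OF gg fmap_graph[OF gg tw(1) x] i]] .
  qed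
qed


lemma dens:
  fixes l u v1 v2 :: real
  assumes u: "u \<noteq> 0" and irr: "l/u \<notin> \<rat>" and v: "v1 < v2"
  shows "\<exists>m n::int. v1 < of_int m * l + of_int n * u \<and> of_int m * l + of_int n * u < v2"
proof -
  define \<theta> where "\<theta> = l/u"
  define a0 where "a0 = (v1+v2)/(2*u)"
  define e where "e = (v2-v1)/(2*\<bar>u\<bar>)"
  have e: "e > 0" using u v unfolding e_def by auto
  obtain h k :: int where hk: "k > 0" "\<bar>of_int k * \<theta> - of_int h - a0\<bar> < e"
    using sequence_of_fractional_parts_is_dense[OF irr[folded \<theta>_def] e] by metis
  have lu: "l = \<theta> * u" unfolding \<theta>_def using u by simp
  have eq: "of_int k * l + of_int (-h) * u - (v1+v2)/2 = u * (of_int k * \<theta> - of_int h - a0)"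
    unfolding lu a0_def using u by (simp add: field_simps)
  have "\<bar>of_int k * l + of_int (-h) * u - (v1+v2)/2\<bar> = \<bar>u\<bar> * \<bar>of_int k * \<theta> - of_int h - a0\<bar>"
    unfolding eq abs_mult ..
  also have "\<dots> < \<bar>u\<bar> * e" using hk(2) u by (intro mult_strict_left_mono) auto
  also have "\<bar>u\<bar> * e = (v2 - v1)/2" unfolding e_def using u by simp
  finally have "\<bar>of_int k * l + of_int (-h) * u - (v1+v2)/2\<bar> < (v2 - v1)/2" .
  then have h0: "\<bar>of_int k * l + of_int (-h) * u - (v1+v2)/2\<bar> < (v2 - v1)/2" .
  define X where "X = of_int k * l + of_int (-h) * u"
  have "\<bar>X - (v1+v2)/2\<bar> < (v2 - v1)/2" using h0 unfolding X_def .
  then have a: "X - (v1+v2)/2 < (v2 - v1)/2" and b: "- (X - (v1+v2)/2) < (v2 - v1)/2"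
    unfolding abs_less_iff by blast+
  from a have "X < v2" by (simp add: field_simps)
  moreover from b have "v1 < X" by (simp add: field_simps)
  ultimately have "v1 < X \<and> X < v2" by blast
  then have "v1 < of_int k * l + of_int (-h) * u \<and> of_int k * l + of_int (-h) * u < v2" unfolding X_def .
  then show ?thesis by blast
qed

lemma irr:
  fixes l u :: real
  assumes u: "u \<noteq> 0" and inj: "\<forall>m n::int. of_int m * l + of_int n * u = 0 \<longrightarrow> m = 0 \<and> n = 0"
  shows "l/u \<notin> \<rat>"
proof
  assume "l/u \<in> \<rat>"
  then obtain i :: int and n :: nat where i: "l/u = of_int i / real n" "n \<noteq> 0"
    unfolding Rats_eq_int_div_nat by blast
  then have "real n * l = of_int i * u" using u by (simp add: field_simps)
  then have "of_int (int n) * l + of_int (-i) * u = 0" by simp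
  then have "int n = 0" using inj by blast
  then show False using i(2) by simp
qed

lemma real_core:
  fixes l u l' u' :: real
  assumes neg: "l < 0" "u < 0" "l' < 0" "u' < 0"
  and M1: "\<forall>m n::int. of_int m * l + of_int n * u < 0 \<longrightarrow> of_int m * l' + of_int n * u' < 0"
  and M2: "\<forall>m n::int. of_int m * l + of_int n * u < ln (1 - exp l) \<longrightarrow> of_int m * l' + of_int n * u' < ln (1 - exp l')"
  and M3: "\<forall>m n::int. ln (1 - exp l) < of_int m * l + of_int n * u \<longrightarrow> ln (1 - exp l') < of_int m * l' + of_int n * u'"
  and inj: "\<forall>m n::int. of_int m * l + of_int n * u = 0 \<longrightarrow> m = 0 \<and> n = 0"
  shows "l = l' \<and> u = u'"
proof -
  define \<theta> where "\<theta> = l/u"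
  define \<theta>' where "\<theta>' = l'/u'"
  have lu: "l = \<theta> * u" "l' = \<theta>' * u'" unfolding \<theta>_def \<theta>'_def using neg by auto
  have sep: False if rr: "a < r" "r < b" "r \<in> \<rat>" "(a = \<theta> \<and> b = \<theta>') \<or> (a = \<theta>' \<and> b = \<theta>)" for a b r
  proof -
    obtain i :: int and n :: nat where i: "r = of_int i / real n" "n \<noteq> 0"
      using rr(3) unfolding Rats_eq_int_div_nat by blast
    have L: "of_int (int n) * l + of_int (-i) * u = u * real n * (\<theta> - r)"
      unfolding lu i(1) using i(2) by (simp add: field_simps)
    have L': "of_int (int n) * l' + of_int (-i) * u' = u' * real n * (\<theta>' - r)"
      unfolding lu i(1) using i(2) by (simp add: field_simps)
    have L2: "of_int (- int n) * l + of_int i * u = - (u * real n * (\<theta> - r))"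
      unfolding lu i(1) using i(2) by (simp add: field_simps)
    have L2': "of_int (- int n) * l' + of_int i * u' = - (u' * real n * (\<theta>' - r))"
      unfolding lu i(1) using i(2) by (simp add: field_simps)
    have n: "real n > 0" using i(2) by simp
    from rr(4) show False
    proof
      assume ab: "a = \<theta> \<and> b = \<theta>'"
      have "u * real n * (\<theta> - r) > 0" using neg n rr ab by (intro mult_neg_neg) (auto intro: mult_neg_pos)
      then have "of_int (- int n) * l + of_int i * u < 0" using L2 by simp
      then have "of_int (- int n) * l' + of_int i * u' < 0" using M1 by blast
      moreover have "u' * real n * (\<theta>' - r) < 0" using neg n rr ab by (intro mult_neg_pos) auto
      ultimately show False using L2' by simp
    next
      assume ab: "a = \<theta>' \<and> b = \<theta>"
      have "u * real n * (\<theta> - r) < 0" using neg n rr ab by (intro mult_neg_pos) auto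
      then have "of_int (int n) * l + of_int (-i) * u < 0" using L by simp
      then have "of_int (int n) * l' + of_int (-i) * u' < 0" using M1 by blast
      moreover have "u' * real n * (\<theta>' - r) > 0" using neg n rr ab by (intro mult_neg_neg) (auto intro: mult_neg_pos)
      ultimately show False using L' by simp
    qed
  qed
  have th: "\<theta>' = \<theta>"
  proof (rule ccontr)
    assume "\<theta>' \<noteq> \<theta>"
    then consider "\<theta> < \<theta>'" | "\<theta>' < \<theta>" by linarith
    then show False
    proof cases
      case 1
      then obtain r where "r \<in> \<rat>" "\<theta> < r" "r < \<theta>'" using Rats_dense_in_real by blast
      then show False using sep[of \<theta> r \<theta>'] by blast
    next
      case 2
      then obtain r where "r \<in> \<rat>" "\<theta>' < r" "r < \<theta>" using Rats_dense_in_real by blast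
      then show False using sep[of \<theta>' r \<theta>] by blast
    qed
  qed
  define t where "t = u'/u"
  have t: "t > 0" "u' = t * u" unfolding t_def using neg by (auto simp: divide_neg_neg)
  have l't: "l' = t * l" using lu th t by simp
  have Lt: "of_int m * l' + of_int n * u' = t * (of_int m * l + of_int n * u)" for m n :: int
    using t(2) l't by (simp add: algebra_simps)
  have "t = 1"
  proof (rule ccontr)
    assume t1: "t \<noteq> 1"
    define \<alpha> where "\<alpha> = ln (1 - exp l)"
    define \<alpha>' where "\<alpha>' = ln (1 - exp l')"
    have el: "0 < exp l" "exp l < 1" "0 < exp l'" "exp l' < 1" using neg by auto
    have ea: "exp \<alpha> = 1 - exp l" "exp \<alpha>' = 1 - exp l'" unfolding \<alpha>_def \<alpha>'_def using el by auto
    have an: "\<alpha> < 0" unfolding \<alpha>_def using el by (auto intro: ln_less_zero)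
    have ne: "\<alpha>' \<noteq> t * \<alpha>"
    proof
      assume eq: "\<alpha>' = t * \<alpha>"
      then have s: "exp (t*\<alpha>) + exp (t*l) = 1" using ea(2) l't by simp
      have s1: "exp \<alpha> + exp l = 1" using ea(1) by simp
      consider "t > 1" | "t < 1" using t1 by linarith
      then show False
      proof cases
        case 1
        then have "t*\<alpha> < \<alpha>" "t*l < l" using an neg by (auto simp: mult_less_cancel_right1)
        then have "exp (t*\<alpha>) < exp \<alpha>" "exp (t*l) < exp l" by auto
        then show False using s s1 by linarith
      next
        case 2
        then have "\<alpha> < t*\<alpha>" "l < t*l" using an neg t(1) by (auto simp: mult_less_cancel_right2)
        then have "exp \<alpha> < exp (t*\<alpha>)" "exp l < exp (t*l)" by auto
        then show False using s s1 by linarith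
      qed
    qed
    have uz: "u \<noteq> 0" using neg by simp
    have irr': "l/u \<notin> \<rat>" using irr[OF uz inj] .
    have "t*\<alpha> < \<alpha>' \<or> \<alpha>' < t*\<alpha>" using ne by linarith
    then have "\<alpha> < \<alpha>'/t \<or> \<alpha>'/t < \<alpha>" using t(1) by (simp add: less_divide_eq divide_less_eq mult.commute)
    then consider "\<alpha> < \<alpha>'/t" | "\<alpha>'/t < \<alpha>" by blast
    then show False
    proof cases
      case 1
      obtain m n :: int where mn: "\<alpha> < of_int m * l + of_int n * u" "of_int m * l + of_int n * u < \<alpha>'/t"
        using dens[OF uz irr' 1] by blast
      then have "\<alpha>' < of_int m * l' + of_int n * u'" using M3 unfolding \<alpha>_def \<alpha>'_def by blast
      then have "\<alpha>' < t * (of_int m * l + of_int n * u)" using Lt by simp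
      then have "\<alpha>'/t < of_int m * l + of_int n * u" using t(1) by (simp add: field_simps)
      then show False using mn(2) by simp
    next
      case 2
      obtain m n :: int where mn: "\<alpha>'/t < of_int m * l + of_int n * u" "of_int m * l + of_int n * u < \<alpha>"
        using dens[OF uz irr' 2] by blast
      then have "of_int m * l' + of_int n * u' < \<alpha>'" using M2 unfolding \<alpha>_def \<alpha>'_def by blast
      then have "t * (of_int m * l + of_int n * u) < \<alpha>'" using Lt by simp
      then have "of_int m * l + of_int n * u < \<alpha>'/t" using t(1) by (simp add: field_simps)
      then show False using mn(1) by simp
    qed
  qed
  then show ?thesis using t l't by simp
qed


lemma h_mono:
  fixes h k :: "real \<Rightarrow> real"
  assumes hom: "homeomorphism {0..1} {0..1} h k" and h0: "h 0 = 0"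
    and xy: "0 \<le> x" "x < y" "y \<le> 1"
  shows "h x < h y"
proof -
  have cont: "continuous_on {0..1} h" and inv: "\<And>z. z \<in> {0..1} \<Longrightarrow> k (h z) = z"
    and im: "h ` {0..1} = {0..1}" using hom unfolding homeomorphism_def by auto
  have inj: "inj_on h {0..1}" by (rule inj_on_inverseI[where g = k]) (use inv in auto)
  have hy: "h y \<in> {0..1}" "h x \<in> {0..1}" using im xy by auto
  show ?thesis
  proof (cases "x = 0")
    case True
    have "h y \<noteq> h 0" using inj xy True unfolding inj_on_def by force
    then show ?thesis using True h0 hy by auto
  next
    case False
    then have "0 < x" using xy by auto
    have c: "continuous_on {0..y} h" by (rule continuous_on_subset[OF cont]) (use xy in auto)
    have i: "inj_on h {0..y}" by (rule inj_on_subset[OF inj]) (use xy in auto)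
    from continuous_inj_imp_mono[OF \<open>0 < x\<close> \<open>x < y\<close> c i]
    show ?thesis using h0 hy by auto
  qed
qed

lemma exp_pow: assumes "0 < p" "0 < q"
  shows "p^a*q^b = exp (real a * ln p + real b * ln q)"
  using assms by (simp add: exp_add exp_of_nat_mult)

lemma int_split: "(of_int m :: real) = real (nat m) - real (nat (-m))"
  by (cases "m \<ge> 0") auto

lemma ii_core:
  assumes gg: "good p q" "good p' q'" and tw: "twofold p q"
    and E: "\<forall>x\<in>Kpq p q. \<forall>i\<in>{1..4::nat}. f (Smap p q i x) = Smap p' q' i (f x)"
    and mono: "\<forall>x\<in>Kpq p q. \<forall>y\<in>Kpq p q. x < y \<longrightarrow> f x < f y"
  shows "p = p' \<and> q = q'"
proof -
  let ?K = "Kpq p q"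
  have pos: "0 < p" "p < 1/2" "0 < q" "q < 1/2" "0 < p'" "p' < 1/2" "0 < q'" "q' < 1/2"
    using gg by (auto simp: good_def)
  have K0: "0 \<in> ?K" using Kpq_props(4)[OF gg(1)] .
  have K1: "1 \<in> ?K" using one_in_K[OF gg(1)] .
  have Ei: "f (Smap p q i x) = Smap p' q' i (f x)" if "x \<in> ?K" "i \<in> {1..4}" for i x
    using E that by blast
  have SK: "Smap p q i x \<in> ?K" if "x \<in> ?K" "i \<in> {1..4}" for i x using Smap_in_K[OF gg(1) that] .
  have f0: "f 0 = 0"
  proof -
    have "f 0 = f (Smap p q 1 0)" by simp
    also have "\<dots> = p' * f 0" using Ei[OF K0, of 1] by simp
    finally have "(1 - p') * f 0 = 0" by (simp add: algebra_simps)
    then show ?thesis using pos by simp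
  qed
  have f1: "f 1 = 1"
  proof -
    have "f 1 = f (Smap p q 3 1)" by simp
    also have "\<dots> = p' * f 1 + 1 - p'" using Ei[OF K1, of 3] by simp
    finally have "(1 - p') * (f 1 - 1) = 0" by (simp add: algebra_simps)
    then show ?thesis using pos by simp
  qed
  have f1p: "f (1 - p) = 1 - p'"
  proof -
    have "f (1 - p) = f (Smap p q 3 0)" by simp
    also have "\<dots> = p' * f 0 + 1 - p'" using Ei[OF K0, of 3] by simp
    finally show ?thesis using f0 by simp
  qed
  have K1p: "1 - p \<in> ?K" using SK[OF K0, of 3] by simp
  have powp: "\<forall>x\<in>?K. p^a*x \<in> ?K \<and> f (p^a*x) = p'^a * f x" for a
  proof (induction a)
    case (Suc a)
    show ?case
    proof
      fix x assume x: "x \<in> ?K"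
      have a: "p^a*x \<in> ?K" "f (p^a*x) = p'^a * f x" using Suc x by auto
      have "p^Suc a * x = Smap p q 1 (p^a*x)" by simp
      then show "p^Suc a*x \<in> ?K \<and> f (p^Suc a*x) = p'^Suc a * f x"
        using SK[OF a(1), of 1] Ei[OF a(1), of 1] a by (simp add: mult.assoc)
    qed
  qed simp
  have powq: "\<forall>x\<in>?K. q^b*x \<in> ?K \<and> f (q^b*x) = q'^b * f x" for b
  proof (induction b)
    case (Suc b)
    show ?case
    proof
      fix x assume x: "x \<in> ?K"
      have a: "q^b*x \<in> ?K" "f (q^b*x) = q'^b * f x" using Suc x by auto
      have "q^Suc b * x = Smap p q 2 (q^b*x)" by simp
      then show "q^Suc b*x \<in> ?K \<and> f (q^Suc b*x) = q'^Suc b * f x"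
        using SK[OF a(1), of 2] Ei[OF a(1), of 2] a by (simp add: mult.assoc)
    qed
  qed simp
  have pw: "p^a*q^b*x \<in> ?K \<and> f (p^a*q^b*x) = p' ^ a * q' ^ b * f x" if "x \<in> ?K" for a b x
    using powp[of a] powq[of b] that by (simp add: mult.assoc)
  have P1: "p^a*q^b \<in> ?K" "f (p^a*q^b) = p' ^ a * q' ^ b" for a b using pw[OF K1, of a b] f1 by auto
  have P2: "p^a*q^b*(1-p) \<in> ?K" "f (p^a*q^b*(1-p)) = p' ^ a * q' ^ b * (1-p')" for a b
    using pw[OF K1p, of a b] f1p by auto
  have one_A: "1 \<in> Apq p q" unfolding Apq_def using K1 by (force intro: image_eqI[where x=1])
  have inj0: "p^a*q^b = p^c*q^d \<Longrightarrow> a = c \<and> b = d" for a b c d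
    using pieces_unique[OF gg(1) tw one_A one_A, of a b c d] by simp
  define l where "l = ln p" define u where "u = ln q"
  define l' where "l' = ln p'" define u' where "u' = ln q'"
  have ep: "exp l = p" "exp u = q" "exp l' = p'" "exp u' = q'" using pos unfolding l_def u_def l'_def u'_def by auto
  have X: "p^a*q^b = exp (real a * l + real b * u)" "p'^a*q'^b = exp (real a * l' + real b * u')" for a b
    using exp_pow[of p q a b] exp_pow[of p' q' a b] pos unfolding l_def u_def l'_def u'_def by auto
  have lp: "ln (1 - exp l) = ln (1 - p)" "ln (1 - exp l') = ln (1 - p')" using ep by auto
  have e1p: "exp (ln (1-p)) = 1 - p" "exp (ln (1-p')) = 1 - p'" using pos by auto
  have Xp: "p^a*q^b*(1-p) = exp (real a * l + real b * u + ln (1-p))"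
     "p'^a*q'^b*(1-p') = exp (real a * l' + real b * u' + ln (1-p'))" for a b
    unfolding exp_add X e1p by simp_all
  have LL: "of_int m * l + of_int n * u = (real (nat m) * l + real (nat n) * u) - (real (nat (-m)) * l + real (nat (-n)) * u)"
     "of_int m * l' + of_int n * u' = (real (nat m) * l' + real (nat n) * u') - (real (nat (-m)) * l' + real (nat (-n)) * u')"
    for m n :: int
    unfolding int_split[of m] int_split[of n] by (simp_all add: algebra_simps)
  have M1: "\<forall>m n::int. of_int m * l + of_int n * u < 0 \<longrightarrow> of_int m * l' + of_int n * u' < 0"
  proof (intro allI impI)
    fix m n :: int
    let ?a = "nat m" let ?b = "nat n" let ?c = "nat (-m)" let ?d = "nat (-n)"
    assume "of_int m * l + of_int n * u < 0"
    then have "p^?a*q^?b < p^?c*q^?d" unfolding X LL by simp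
    then have "f (p^?a*q^?b) < f (p^?c*q^?d)" using mono P1 by blast
    then have "p'^?a*q'^?b < p'^?c*q'^?d" unfolding P1 .
    then show "of_int m * l' + of_int n * u' < 0" unfolding X LL by simp
  qed
  have M2: "\<forall>m n::int. of_int m * l + of_int n * u < ln (1 - exp l) \<longrightarrow> of_int m * l' + of_int n * u' < ln (1 - exp l')"
  proof (intro allI impI)
    fix m n :: int
    let ?a = "nat m" let ?b = "nat n" let ?c = "nat (-m)" let ?d = "nat (-n)"
    assume "of_int m * l + of_int n * u < ln (1 - exp l)"
    then have "p^?a*q^?b < p^?c*q^?d*(1-p)" unfolding Xp unfolding X LL lp by simp
    then have "f (p^?a*q^?b) < f (p^?c*q^?d*(1-p))" using mono P1 P2 by blast
    then have "p'^?a*q'^?b < p'^?c*q'^?d*(1-p')" unfolding P1 P2 .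
    then show "of_int m * l' + of_int n * u' < ln (1 - exp l')" unfolding Xp unfolding X LL lp by simp
  qed
  have M3: "\<forall>m n::int. ln (1 - exp l) < of_int m * l + of_int n * u \<longrightarrow> ln (1 - exp l') < of_int m * l' + of_int n * u'"
  proof (intro allI impI)
    fix m n :: int
    let ?a = "nat m" let ?b = "nat n" let ?c = "nat (-m)" let ?d = "nat (-n)"
    assume "ln (1 - exp l) < of_int m * l + of_int n * u"
    then have "p^?c*q^?d*(1-p) < p^?a*q^?b" unfolding Xp unfolding X LL lp by simp
    then have "f (p^?c*q^?d*(1-p)) < f (p^?a*q^?b)" using mono P1 P2 by blast
    then have "p'^?c*q'^?d*(1-p') < p'^?a*q'^?b" unfolding P1 P2 .
    then show "ln (1 - exp l') < of_int m * l' + of_int n * u'" unfolding Xp unfolding X LL lp by simp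
  qed
  have INJ: "\<forall>m n::int. of_int m * l + of_int n * u = 0 \<longrightarrow> m = 0 \<and> n = 0"
  proof (intro allI impI)
    fix m n :: int
    let ?a = "nat m" let ?b = "nat n" let ?c = "nat (-m)" let ?d = "nat (-n)"
    assume "of_int m * l + of_int n * u = 0"
    then have "p^?a*q^?b = p^?c*q^?d" unfolding X LL by simp
    then have "?a = ?c \<and> ?b = ?d" by (rule inj0)
    then show "m = 0 \<and> n = 0" by auto
  qed
  have neg: "l < 0" "u < 0" "l' < 0" "u' < 0" unfolding l_def u_def l'_def u'_def using pos by auto
  from real_core[OF neg M1 M2 M3 INJ] have "l = l'" "u = u'" by auto
  then show ?thesis using ep by metis
qed


theorem theorem11:
  fixes p q p' q' :: real
  assumes "0 < p" "p < 1/2" "0 < q" "q < 1/2"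
      and "0 < p'" "p' < 1/2" "0 < q'" "q' < 1/2"
      and "twofold p q" "twofold p' q'"
  shows "(\<exists>f g. homeomorphism (Kpq p q) (Kpq p' q') f g \<and>
            (\<forall>x\<in>Kpq p q. \<forall>i\<in>{1..4::nat}. f (Smap p q i x) = Smap p' q' i (f x)))
       \<and> ((p, q) \<noteq> (p', q') \<longrightarrow>
            (\<forall>f g. homeomorphism (Kpq p q) (Kpq p' q') f g \<and>
                   (\<forall>x\<in>Kpq p q. \<forall>i\<in>{1..4::nat}. f (Smap p q i x) = Smap p' q' i (f x))
               \<longrightarrow> \<not> (\<exists>h k. homeomorphism {0..1::real} {0..1} h k \<and>
                            (\<forall>x\<in>Kpq p q. h x = f x))))"
proof -
  have gg: "good p q" "good p' q'" using assms unfolding good_def by auto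
  show ?thesis
  proof (intro conjI impI allI)
    show "\<exists>f g. homeomorphism (Kpq p q) (Kpq p' q') f g \<and>
            (\<forall>x\<in>Kpq p q. \<forall>i\<in>{1..4::nat}. f (Smap p q i x) = Smap p' q' i (f x))"
      by (rule part_i[OF gg assms(9,10)])
  next
    fix f g :: "real \<Rightarrow> real"
    assume ne: "(p, q) \<noteq> (p', q')"
      and fg: "homeomorphism (Kpq p q) (Kpq p' q') f g \<and>
                   (\<forall>x\<in>Kpq p q. \<forall>i\<in>{1..4::nat}. f (Smap p q i x) = Smap p' q' i (f x))"
    show "\<not> (\<exists>h k. homeomorphism {0..1::real} {0..1} h k \<and> (\<forall>x\<in>Kpq p q. h x = f x))"
    proof
      assume "\<exists>h k. homeomorphism {0..1::real} {0..1} h k \<and> (\<forall>x\<in>Kpq p q. h x = f x)"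
      then obtain h k where hk: "homeomorphism {0..1::real} {0..1} h k" "\<forall>x\<in>Kpq p q. h x = f x"
        by blast
      have E: "\<forall>x\<in>Kpq p q. \<forall>i\<in>{1..4::nat}. f (Smap p q i x) = Smap p' q' i (f x)"
        using fg by blast
      have K0: "0 \<in> Kpq p q" using Kpq_props(4)[OF gg(1)] .
      have f0: "f 0 = 0"
      proof -
        have "f 0 = f (Smap p q 1 0)" by simp
        also have "\<dots> = Smap p' q' 1 (f 0)"
        proof -
          have "\<forall>i\<in>{1..4::nat}. f (Smap p q i 0) = Smap p' q' i (f 0)" using E K0 by blast
          then show ?thesis by (rule bspec) simp
        qed
        also have "\<dots> = p' * f 0" by simp
        finally have "(1 - p') * f 0 = 0" by (simp add: algebra_simps)
        then show ?thesis using assms(6) by simp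
      qed
      have h0: "h 0 = 0" using hk(2) K0 f0 by simp
      have mono: "\<forall>x\<in>Kpq p q. \<forall>y\<in>Kpq p q. x < y \<longrightarrow> f x < f y"
      proof (intro ballI impI)
        fix x y assume x: "x \<in> Kpq p q" and y: "y \<in> Kpq p q" and xy: "x < y"
        have "0 \<le> x" "y \<le> 1" using x y Kpq_props(5)[OF gg(1)] by auto
        then have "h x < h y" using h_mono[OF hk(1) h0 _ xy] by simp
        then show "f x < f y" using hk(2) x y by simp
      qed
      from ii_core[OF gg assms(9) E mono] ne show False by simp
    qed
  qed
qed

end
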